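(* Let $m \geq 4$ be an integer with $m \equiv 0 \pmod 4$, and let $(\boldsymbol{x}_n)_{0 \leq n < 2^m}$ be a $(0,m,2)$-net in base $2$ such that $\boldsymbol{x}_0 = \boldsymbol{\gamma} = (\gamma^{(1)},\gamma^{(2)})$, where \[ \gamma^{(1)} = \frac{1}{2^2} + \frac{1}{2^4}+ \cdots + \frac{1}{2^{m/2}}, \qquad \gamma^{(2)} = \frac{1}{2^{m/2+2}} + \frac{1}{2^{m/2+4}} + \cdots + \frac{1}{2^m}. \] Put $N = 2^m$. Then for the interval $J_{\boldsymbol{\gamma}} = [0,\gamma^{(1)}) \times [0,\gamma^{(2)})$ one has \[ \frac{1}{N} \Delta (\boldsymbol{\gamma},(\boldsymbol{x}_n)_{0 \leq n < 2^m}) \leq -\frac{1}{4} \cdot \frac{1}{2^{m+2}}\, m, \] and consequently \[ D^{*}((\boldsymbol{x}_n)_{0 \leq n < N}) \geq \frac{1}{16 \log 2} \frac{\log N}{N}. \]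
   Context: For integers $b \geq 2$, $s \geq 1$, $0 \leq t \leq m$, a $(t,m,s)$-net in base $b$ is a set (family) of $b^m$ points $\boldsymbol{x}_0,\dots,\boldsymbol{x}_{b^m-1}$ in $[0,1)^s$ such that every interval of the form $\prod_{i=1}^s [a_i b^{-d_i}, (a_i+1) b^{-d_i})$ with $d_i \in \mathbb{N}_0$, $a_i \in \{0,\dots,b^{d_i}-1\}$ and volume $b^{-m+t}$ contains exactly $b^t$ of the points. For a finite family of points $(\boldsymbol{x}_n)_{n}$ in $[0,1)^s$ and $\boldsymbol{y} = (y^{(1)},\dots,y^{(s)}) \in [0,1]^s$, the discrepancy function is $\Delta(\boldsymbol{y},(\boldsymbol{x}_n)_n) = \sum_{n} \big(\chi_{[\boldsymbol{0},\boldsymbol{y})}(\boldsymbol{x}_n) - y^{(1)}\cdots y^{(s)}\big)$, where $[\boldsymbol{0},\boldsymbol{y}) = [0,y^{(1)})\times\cdots\times[0,y^{(s)})$ and $\chi$ denotes the indicator function; the star-discrepancy of an $N$-point family is $D^*((\boldsymbol{x}_n)_n) = \sup_{\boldsymbol{y} \in [0,1)^s} \big| \frac{1}{N}\Delta(\boldsymbol{y},(\boldsymbol{x}_n)_n)\big|$. $\log$ denotes the natural logarithm. *)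

theory Defs
  imports Complex_Main
begin

definition is_net :: "nat \<Rightarrow> nat \<Rightarrow> nat \<Rightarrow> nat \<Rightarrow> (nat \<Rightarrow> nat \<Rightarrow> real) \<Rightarrow> bool" where
  "is_net b t m s x \<longleftrightarrow> t \<le> m \<and>
     (\<forall>n < b ^ m. \<forall>i < s. 0 \<le> x n i \<and> x n i < 1) \<and>
     (\<forall>(d :: nat \<Rightarrow> nat) (a :: nat \<Rightarrow> nat).
        (\<forall>i < s. a i < b ^ d i) \<and> (\<Prod>i<s. 1 / real b ^ d i) = real b powr (real t - real m) \<longrightarrow>
        card {n. n < b ^ m \<and> (\<forall>i < s. real (a i) / real b ^ d i \<le> x n i \<and>
                                   x n i < (real (a i) + 1) / real b ^ d i)} = b ^ t)"

definition discrepancy_fun :: "nat \<Rightarrow> nat \<Rightarrow> (nat \<Rightarrow> nat \<Rightarrow> real) \<Rightarrow> (nat \<Rightarrow> real) \<Rightarrow> real" where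
  "discrepancy_fun s N x y =
     (\<Sum>n<N. (if (\<forall>i<s. 0 \<le> x n i \<and> x n i < y i) then 1 else 0) - (\<Prod>i<s. y i))"

definition star_discrepancy :: "nat \<Rightarrow> nat \<Rightarrow> (nat \<Rightarrow> nat \<Rightarrow> real) \<Rightarrow> real" where
  "star_discrepancy s N x =
     (SUP y \<in> {y :: nat \<Rightarrow> real. \<forall>i<s. 0 \<le> y i \<and> y i < 1}. \<bar>discrepancy_fun s N x y / real N\<bar>)"

end

theory Submission imports Defs begin
fun G :: "nat \<Rightarrow> nat" where "G 0 = 0" | "G (Suc j) = 4 * G j + 1"

lemma G_eq: "3 * G j + 1 = 4 ^ j" by (induction j) auto
lemma G_add: "G (a + b) = 4 ^ b * G a + G b" by (induction b) (auto simp: algebra_simps)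
lemma G_lt2: "2 * G j < 4 ^ j" using G_eq[of j] by linarith
lemma G_odd: "j \<ge> 1 \<Longrightarrow> odd (G j)" by (cases j) auto
lemma G_sum: "3 * (\<Sum>j<M. G j) + M = G M" by (induction M) auto

lemma cover: "V < G M \<Longrightarrow> \<exists>k\<in>{1..M}. V div 4 ^ (M - k) = G k - 1"
proof (induction M arbitrary: V)
  case 0 then show ?case by simp
next
  case (Suc M)
  have "V div 4 \<le> G M" using Suc.prems by simp
  show ?case
  proof (cases "V div 4 < G M")
    case True
    then obtain k where k: "k \<in> {1..M}" "V div 4 div 4 ^ (M - k) = G k - 1" using Suc.IH by blast
    have "Suc M - k = Suc (M - k)" using k by auto
    then have "V div 4 ^ (Suc M - k) = V div 4 div 4 ^ (M - k)" by (simp add: div_mult2_eq)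
    then show ?thesis using k by (intro bexI[of _ k]) auto
  next
    case False
    then have "V = 4 * G M" using Suc.prems \<open>V div 4 \<le> G M\<close> by simp
    then show ?thesis by (intro bexI[of _ "Suc M"]) auto
  qed
qed

lemma divhelp: "r < (c::nat) \<Longrightarrow> (c * q + r) div c = q" by simp

lemma int_main:
  fixes U Y :: "nat \<Rightarrow> nat" and N M :: nat
  assumes uniq: "\<And>n n' d. n < N \<Longrightarrow> n' < N \<Longrightarrow> d \<le> 4*M \<Longrightarrow>
      U n div 2^(4*M-d) = U n' div 2^(4*M-d) \<Longrightarrow> Y n div 2^d = Y n' div 2^d \<Longrightarrow> n = n'"
    and U0: "U 0 = G M * 4^M" and Y0: "Y 0 = G M" and N: "0 < N"
  shows "card {n. n<N \<and> U n < G M * 4^M \<and> Y n < G M} \<le> (\<Sum>k\<in>{1..M}. G (M-k))"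
proof -
  define P where "P = {n. n<N \<and> U n < G M * 4^M \<and> Y n < G M}"
  define Pk where "Pk k = {n\<in>P. U n div 4^(2*M-k) = G k - 1}" for k
  have sub: "P \<subseteq> (\<Union>k\<in>{1..M}. Pk k)"
  proof
    fix n assume n: "n \<in> P"
    then have "U n div 4^M < G M" unfolding P_def by (simp add: less_mult_imp_div_less)
    then obtain k where k: "k\<in>{1..M}" "U n div 4^M div 4 ^ (M - k) = G k - 1" using cover by blast
    have "4^(2*M-k) = 4^M * (4::nat)^(M-k)" using k by (simp add: power_add[symmetric])
    then have "U n div 4^(2*M-k) = G k - 1" using k by (simp add: div_mult2_eq)
    then show "n \<in> (\<Union>k\<in>{1..M}. Pk k)" using k n unfolding Pk_def by auto
  qed
  have cardk: "card (Pk k) \<le> G (M - k)" if k: "k \<in> {1..M}" for k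
  proof -
    have GM: "G M = 4^k * G (M-k) + G k" using G_add[of "M-k" k] k by simp
    have GM2: "G M = 4^(M-k) * G k + G (M-k)" using G_add[of k "M-k"] k by simp
    have e1: "(2::nat)^(2*k) = 4^k" by (simp add: power_mult)
    have e2: "(2::nat)^(4*M-2*k) = 4^(2*M-k)"
    proof -
      have "4*M-2*k = 2*(2*M-k)" by simp
      then show ?thesis by (simp add: power_mult)
    qed
    have inj: "inj_on (\<lambda>n. Y n div 4^k) (Pk k)"
    proof (rule inj_onI)
      fix n n' assume a: "n \<in> Pk k" "n' \<in> Pk k" "Y n div 4^k = Y n' div 4^k"
      show "n = n'"
        using uniq[of n n' "2*k"] a e1 e2 k unfolding Pk_def P_def by auto
    qed
    have img: "(\<lambda>n. Y n div 4^k) ` Pk k \<subseteq> {..<G (M-k)}"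
    proof
      fix b assume "b \<in> (\<lambda>n. Y n div 4^k) ` Pk k"
      then obtain n where n: "n \<in> Pk k" "b = Y n div 4^k" by auto
      have ylt: "Y n < 4^k * G (M-k) + G k" using n GM unfolding Pk_def P_def by auto
      have "G k < 4^k" using G_lt2[of k] by simp
      then have "Y n < (G (M-k) + 1) * 4^k" using ylt by (simp add: algebra_simps)
      then have "Y n div 4^k < G (M-k) + 1" by (rule less_mult_imp_div_less)
      then have ble: "b \<le> G (M-k)" using n(2) by simp 
      moreover have "b \<noteq> G (M-k)"
      proof
        assume bG: "b = G (M-k)"
        define K where "K = (2::nat)^(2*k-1)"
        have K4: "4^k = 2 * K"
        proof -
          have "2*k = Suc (2*k-1)" using k by auto
          have "(4::nat)^k = 2^(2*k)" by (simp add: power_mult)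
          also have "\<dots> = 2 * K" unfolding K_def by (subst \<open>2*k = Suc (2*k-1)\<close>) simp
          finally show ?thesis .
        qed
        have GkK: "G k < K" using G_lt2[of k] K4 by simp
        define r where "r = Y n mod 4^k"
        have Yn: "Y n = 4^k * G (M-k) + r" using bG n(2) r_def div_mult_mod_eq[of "Y n" "4^k"] by (simp add: ac_simps)
        have "r < G k" using Yn ylt by simp
        have y1: "Y n div K = 2 * G (M-k)" 
          using Yn K4 \<open>r < G k\<close> GkK divhelp[of r K "2 * G (M-k)"] by (simp add: ac_simps)
        have y2: "Y 0 div K = 2 * G (M-k)"
          using Y0 GM K4 GkK divhelp[of "G k" K "2 * G (M-k)"] by (simp add: ac_simps)
        have e3: "(2::nat)^(4*M-(2*k-1)) = 4^(2*M-k) * 2"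
        proof -
          have "4*M-(2*k-1) = Suc (2*(2*M-k))" using k by auto
          then show ?thesis by (simp add: power_mult)
        qed
        have u1: "U n div 4^(2*M-k) = G k - 1" using n unfolding Pk_def by auto
        have "4^(2*M-k) = 4^M * (4::nat)^(M-k)" using k by (simp add: power_add[symmetric])
        then have u2: "U 0 div 4^(2*M-k) = G k" using U0 GM2 G_lt2[of "M-k"]
          by (simp add: div_mult2_eq divhelp)
        have "(G k - 1) div 2 = G k div 2" using G_odd[of k] k by (auto elim!: oddE)
        then have "U n div 2^(4*M-(2*k-1)) = U 0 div 2^(4*M-(2*k-1))"
          using u1 u2 e3 by (simp add: div_mult2_eq)
        then have "n = 0" using uniq[of n 0 "2*k-1"] y1 y2 n N k unfolding K_def Pk_def P_def by auto
        then show False using n U0 unfolding Pk_def P_def by auto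
      qed
      ultimately show "b \<in> {..<G (M-k)}" by auto
    qed
    show ?thesis using card_inj_on_le[OF inj img] by simp
  qed
  have "card P \<le> card (\<Union>k\<in>{1..M}. Pk k)"
    by (rule card_mono[OF _ sub]) (auto simp: Pk_def P_def)
  also have "\<dots> \<le> (\<Sum>k\<in>{1..M}. card (Pk k))" by (rule card_UN_le) simp
  also have "\<dots> \<le> (\<Sum>k\<in>{1..M}. G (M-k))" by (rule sum_mono) (rule cardk)
  finally show ?thesis unfolding P_def .
qed

lemma sum_rev: "(\<Sum>k\<in>{1..M}. G (M-k)) = (\<Sum>j<M. G j)"
  by (rule sum.reindex_bij_witness[of _ "\<lambda>b. M - b" "\<lambda>k. M - k"]) auto

lemma cell:
  fixes u :: real
  assumes u: "0 \<le> u" and d: "d \<le> m"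
  shows "(real a / 2^d \<le> u \<and> u < (real a + 1) / 2^d) \<longleftrightarrow> nat \<lfloor>u * 2^m\<rfloor> div 2^(m-d) = a"
proof -
  define c :: nat where "c = 2^(m-d)"
  define F where "F = nat \<lfloor>u * 2^m\<rfloor>"
  have c0: "c > 0" unfolding c_def by simp
  have pm: "(2::real)^m = 2^d * real c" unfolding c_def using d by (simp add: power_add[symmetric])
  have F0: "real F = of_int \<lfloor>u * 2^m\<rfloor>" unfolding F_def using u by simp
  have "real a / 2^d \<le> u \<longleftrightarrow> real a \<le> u * 2^d" by (simp add: divide_le_eq)
  also have "\<dots> \<longleftrightarrow> real a * real c \<le> u * 2^d * real c" using c0 by simp
  also have "\<dots> \<longleftrightarrow> real (a * c) \<le> u * 2^m" using pm by (simp add: ac_simps)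
  also have "\<dots> \<longleftrightarrow> int (a * c) \<le> \<lfloor>u * 2^m\<rfloor>" by (simp only: le_floor_iff) simp
  also have "\<dots> \<longleftrightarrow> a * c \<le> F" unfolding F_def using u by (simp add: le_nat_iff)
  also have "\<dots> \<longleftrightarrow> a \<le> F div c" using c0 by (simp add: less_eq_div_iff_mult_less_eq)
  finally have 1: "real a / 2^d \<le> u \<longleftrightarrow> a \<le> F div c" .
  have "u < (real a + 1) / 2^d \<longleftrightarrow> u * 2^d < real a + 1" by (simp add: less_divide_eq)
  also have "\<dots> \<longleftrightarrow> u * 2^d * real c < (real a + 1) * real c" using c0 by simp
  also have "\<dots> \<longleftrightarrow> u * 2^m < real ((a+1) * c)" using pm by (simp add: algebra_simps)
  also have "\<dots> \<longleftrightarrow> \<lfloor>u * 2^m\<rfloor> < int ((a+1) * c)" by (simp only: floor_less_iff) simp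
  also have "\<dots> \<longleftrightarrow> F < (a+1) * c" unfolding F_def using u by (simp add: nat_less_iff)
  also have "\<dots> \<longleftrightarrow> F div c < a + 1" using c0 by (simp add: div_less_iff_less_mult)
  finally have 2: "u < (real a + 1) / 2^d \<longleftrightarrow> F div c < a + 1" .
  show ?thesis unfolding 1 2 F_def[symmetric] c_def[symmetric] by linarith
qed

lemma thr:
  fixes u :: real
  assumes u: "0 \<le> u"
  shows "u < real c / 2^m \<longleftrightarrow> nat \<lfloor>u * 2^m\<rfloor> < c"
proof -
  have "u < real c / 2^m \<longleftrightarrow> u * 2^m < real c" by (simp add: field_simps)
  also have "\<dots> \<longleftrightarrow> \<lfloor>u * 2^m\<rfloor> < int c" by (simp only: floor_less_iff) simp
  also have "\<dots> \<longleftrightarrow> nat \<lfloor>u * 2^m\<rfloor> < c" using u by (simp add: nat_less_iff)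
  finally show ?thesis .
qed

lemma sum_g1: "(\<Sum>k=1..M. 1 / 2 ^ (2 * k) :: real) = real (G M) / 4^M"
proof (induction M)
  case 0 then show ?case by simp
next
  case (Suc M)
  have "(\<Sum>k=1..Suc M. 1 / 2 ^ (2 * k) :: real) = real (G M) / 4^M + 1 / 4^(Suc M)"
    using Suc by (simp add: power_mult)
  also have "\<dots> = real (G (Suc M)) / 4^(Suc M)" by (simp add: field_simps)
  finally show ?case .
qed

lemma sum_g2: "(\<Sum>k=1..M. 1 / 2 ^ (4 * M div 2 + 2 * k) :: real) = real (G M) / 2^(4*M)"
proof -
  have "(\<Sum>k=1..M. 1 / 2 ^ (4 * M div 2 + 2 * k) :: real) = (\<Sum>k=1..M. (1/4^M) * (1 / 2 ^ (2 * k)))"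
    by (rule sum.cong) (simp_all add: power_add power_mult)
  also have "\<dots> = (1/4^M) * (\<Sum>k=1..M. 1 / 2 ^ (2 * k))" by (simp only: sum_distrib_left)
  also have "\<dots> = (1/4^M) * (real (G M) / 4^M)" by (simp only: sum_g1)
  also have "\<dots> = real (G M) / 2^(4*M)" by (simp add: power_mult power_mult_distrib[symmetric])
  finally show ?thesis .
qed

lemma final_ineq:
  fixes S g M :: real
  assumes "3 * S + M = g" "M = 1 \<or> M \<ge> 2" "M = 1 \<longrightarrow> g = 1" "g \<ge> 1"
  shows "S - g^2 / (3*g+1) \<le> - M / 4"
proof -
  have h: "g * (4 - 3*M) \<le> M"
  proof (cases "M = 1")
    case True then show ?thesis using assms by simp
  next
    case False then have "M \<ge> 2" using assms by auto
    then have "g * (4 - 3*M) \<le> 0" using assms by (intro mult_nonneg_nonpos) auto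
    then show ?thesis using \<open>M \<ge> 2\<close> by linarith
  qed
  have S: "S = (g - M) / 3" using assms by simp
  have "S - g^2 / (3*g+1) + M / 4 = (g * (4 - 3*M) - M) / (12 * (3*g+1))"
    using assms(4) unfolding S by (simp add: field_simps power2_eq_square)
  also have "\<dots> \<le> 0" using h assms(4) by (intro divide_nonpos_pos) auto
  finally show ?thesis by simp
qed

theorem theorem3:
  fixes m :: nat and x :: "nat \<Rightarrow> nat \<Rightarrow> real"
  assumes "m \<ge> 4" and "m mod 4 = 0"
    and "is_net 2 0 m 2 x"
    and "x 0 0 = (\<Sum>k=1..m div 4. 1 / 2 ^ (2 * k))"
    and "x 0 1 = (\<Sum>k=1..m div 4. 1 / 2 ^ (m div 2 + 2 * k))"
  shows "discrepancy_fun 2 (2 ^ m) x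
           (\<lambda>i. if i = 0 then (\<Sum>k=1..m div 4. 1 / 2 ^ (2 * k))
                else (\<Sum>k=1..m div 4. 1 / 2 ^ (m div 2 + 2 * k))) / 2 ^ m
           \<le> - (1 / 4) * (1 / 2 ^ (m + 2)) * real m \<and>
         star_discrepancy 2 (2 ^ m) x \<ge> 1 / (16 * ln 2) * (ln (2 ^ m) / 2 ^ m)"
proof -
  define M where "M = m div 4"
  have mM: "m = 4 * M" using assms(2) unfolding M_def by auto
  have M1: "M \<ge> 1" using assms(1) mM by simp
  define g where "g = G M"
  have p2: "(2::real)^m = 4^M * 4^M"
    unfolding mM by (simp add: power_mult power_mult_distrib[symmetric])
  have g1: "(\<Sum>k=1..m div 4. 1 / 2 ^ (2 * k) :: real) = real g / 4^M"
    unfolding M_def[symmetric] g_def by (rule sum_g1)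
  have g2: "(\<Sum>k=1..m div 4. 1 / 2 ^ (m div 2 + 2 * k) :: real) = real g / 2^m"
    unfolding M_def[symmetric] g_def using sum_g2[of M] mM by simp
  define y :: "nat \<Rightarrow> real" where "y = (\<lambda>i. if i = 0 then (\<Sum>k=1..m div 4. 1 / 2 ^ (2 * k))
                else (\<Sum>k=1..m div 4. 1 / 2 ^ (m div 2 + 2 * k)))"
  have y0: "y 0 = real (g * 4^M) / 2^m" unfolding y_def g1 p2 by simp
  have y1: "y 1 = real g / 2^m" unfolding y_def g2 by simp
  have rng: "\<And>n i. n < 2^m \<Longrightarrow> i < 2 \<Longrightarrow> 0 \<le> x n i \<and> x n i < 1"
    using assms(3) unfolding is_net_def by auto
  have net: "\<And>d a. (\<forall>i < 2. a i < 2 ^ d i) \<Longrightarrow> (\<Prod>i<2. 1 / real 2 ^ d i) = real 2 powr (real 0 - real m) \<Longrightarrow>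
        card {n. n < 2 ^ m \<and> (\<forall>i < 2. real (a i) / real 2 ^ d i \<le> x n i \<and>
                                   x n i < (real (a i) + 1) / real 2 ^ d i)} = 2 ^ 0"
    using assms(3) unfolding is_net_def by blast
  define U where "U n = nat \<lfloor>x n 0 * 2^m\<rfloor>" for n
  define Y where "Y n = nat \<lfloor>x n 1 * 2^m\<rfloor>" for n
  have Ult: "U n < 2^m" if "n < 2^m" for n
    using thr[of "x n 0" "2^m" m] rng[OF that, of 0] unfolding U_def by simp
  have Ylt: "Y n < 2^m" if "n < 2^m" for n
    using thr[of "x n 1" "2^m" m] rng[OF that, of 1] unfolding Y_def by simp
  have uniq: "n = n'" if n: "n < 2^m" "n' < 2^m" and d: "d \<le> m"
     and eqU: "U n div 2^(m-d) = U n' div 2^(m-d)" and eqY: "Y n div 2^d = Y n' div 2^d" for n n' d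
  proof -
    define dd where "dd = (\<lambda>i::nat. if i = 0 then d else m - d)"
    define aa where "aa = (\<lambda>i::nat. if i = 0 then U n div 2^(m-d) else Y n div 2^d)"
    have 2: "(2::nat) = Suc (Suc 0)" by simp
    have pmd: "(2::nat)^m = 2^d * 2^(m-d)" using d by (simp add: power_add[symmetric])
    have a0: "aa 0 < 2 ^ dd 0" unfolding aa_def dd_def
      using Ult[OF n(1)] pmd by (simp add: div_less_iff_less_mult)
    have a1: "aa 1 < 2 ^ dd 1" unfolding aa_def dd_def
      using Ylt[OF n(1)] pmd by (simp add: div_less_iff_less_mult ac_simps)
    have A: "\<forall>i < 2. aa i < 2 ^ dd i" using a0 a1 by (auto simp: less_2_cases_iff)
    have pr: "(\<Prod>i<2. 1 / real 2 ^ dd i) = real 2 powr (real 0 - real m)"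
    proof -
      have "(\<Prod>i<2. 1 / real 2 ^ dd i) = 1 / 2^d * (1 / 2^(m-d))"
        unfolding dd_def by (simp add: 2)
      also have "\<dots> = 1 / 2^m" using d by (simp add: power_add[symmetric])
      also have "\<dots> = real 2 powr (real 0 - real m)" by (simp add: powr_minus powr_realpow divide_inverse)
      finally show ?thesis .
    qed
    define S where "S = {n. n < 2 ^ m \<and> (\<forall>i < 2. real (aa i) / real 2 ^ dd i \<le> x n i \<and>
                                   x n i < (real (aa i) + 1) / real 2 ^ dd i)}"
    have cS: "card S = 1" using net[OF A pr] unfolding S_def by simp
    have mem: "k \<in> S" if k: "k < 2^m" "U k div 2^(m-d) = U n div 2^(m-d)" "Y k div 2^d = Y n div 2^d" for k
    proof -
      have c0: "real (aa 0) / 2 ^ dd 0 \<le> x k 0 \<and> x k 0 < (real (aa 0) + 1) / 2 ^ dd 0"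
        using cell[of "x k 0" "dd 0" m "aa 0"] rng[OF k(1), of 0] d k(2)
        unfolding dd_def aa_def U_def by simp
      have c1: "real (aa 1) / 2 ^ dd 1 \<le> x k 1 \<and> x k 1 < (real (aa 1) + 1) / 2 ^ dd 1"
        using cell[of "x k 1" "dd 1" m "aa 1"] rng[OF k(1), of 1] d k(3)
        unfolding dd_def aa_def Y_def by simp
      show ?thesis unfolding S_def using k(1) c0 c1 by (auto simp: less_2_cases_iff)
    qed
    have "n \<in> S" "n' \<in> S" using mem[of n] mem[of n'] n eqU eqY by auto
    then show ?thesis using cS by (metis card_1_singletonE singletonD)
  qed
  have U0: "U 0 = g * 4^M"
  proof -
    have "x 0 0 * 2^m = real (g * 4^M)" using assms(4) g1 p2 by simp
    then show ?thesis unfolding U_def by (metis floor_of_nat nat_int)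
  qed
  have Y0: "Y 0 = g"
  proof -
    have "x 0 1 * 2^m = real g" using assms(5) g2 by simp
    then show ?thesis unfolding Y_def by (metis floor_of_nat nat_int)
  qed
  have cardP: "card {n. n < 2^m \<and> U n < G M * 4^M \<and> Y n < G M} \<le> (\<Sum>k\<in>{1..M}. G (M-k))"
    by (rule int_main[where N = "2^m"]) (use uniq mM U0 Y0 g_def in auto)
  define ind where "ind n = (if (\<forall>i<2. 0 \<le> x n i \<and> x n i < y i) then 1 else (0::real))" for n
  define C where "C = {n\<in>{..<(2::nat)^m}. \<forall>i<2. 0 \<le> x n i \<and> x n i < y i}"
  have sumind: "(\<Sum>n<2^m. ind n) = real (card C)"
    unfolding ind_def C_def by (simp add: sum.If_cases) (rule arg_cong[where f=card], auto)
  have CP: "C \<subseteq> {n. n < 2^m \<and> U n < G M * 4^M \<and> Y n < G M}"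
  proof
    fix n assume "n \<in> C"
    then have n: "n < 2^m" "x n 0 < y 0" "x n 1 < y 1" "0 \<le> x n 0" "0 \<le> x n 1" unfolding C_def by auto
    show "n \<in> {n. n < 2^m \<and> U n < G M * 4^M \<and> Y n < G M}"
      using n thr[of "x n 0" "g * 4^M" m] thr[of "x n 1" g m] y0 y1 unfolding U_def Y_def g_def by auto
  qed
  have cC: "card C \<le> (\<Sum>j<M. G j)"
    using card_mono[OF _ CP] cardP sum_rev[of M] by simp
  have disc: "discrepancy_fun 2 (2^m) x y = real (card C) - 2^m * (y 0 * y 1)"
  proof -
    have "(\<Prod>i<2. y i) = y 0 * y 1" by (simp add: numeral_2_eq_2)
    then show ?thesis unfolding discrepancy_fun_def ind_def[symmetric]
      by (simp add: sum_subtractf sumind)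
  qed
  have gpos: "g \<ge> 1" unfolding g_def using M1 by (cases M) auto
  have prodval: "2^m * (y 0 * y 1) = real g ^ 2 / (3 * real g + 1)"
  proof -
    have "(4::real)^M = 3 * real g + 1" unfolding g_def using G_eq[of M] by (metis of_nat_numeral of_nat_power of_nat_add of_nat_mult of_nat_1)
    moreover have "2^m * (y 0 * y 1) = real g ^ 2 / 4^M"
      unfolding y0 y1 p2 by (simp add: field_simps power2_eq_square)
    ultimately show ?thesis by simp
  qed
  have sg: "3 * real (\<Sum>j<M. G j) + real M = real g" unfolding g_def using G_sum[of M] by (metis of_nat_numeral of_nat_add of_nat_mult)
  have fi: "real (\<Sum>j<M. G j) - real g ^ 2 / (3 * real g + 1) \<le> - real M / 4"
    by (rule final_ineq[OF sg]) (use M1 gpos in \<open>auto simp: g_def\<close>)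
  have dle: "discrepancy_fun 2 (2^m) x y \<le> - real M / 4"
    using disc prodval fi cC by linarith
  have part1: "discrepancy_fun 2 (2^m) x y / 2^m \<le> - (1 / 4) * (1 / 2 ^ (m + 2)) * real m"
  proof -
    have "- (1 / 4) * (1 / 2 ^ (m + 2)) * real m = (- real M / 4) / 2^m" unfolding mM by (simp add: field_simps)
    moreover have "discrepancy_fun 2 (2^m) x y / 2^m \<le> (- real M / 4) / 2^m"
      by (rule divide_right_mono[OF dle]) simp
    ultimately show ?thesis by simp
  qed
  define Ys where "Ys = {y :: nat \<Rightarrow> real. \<forall>i<2. 0 \<le> y i \<and> y i < 1}"
  have yin: "y \<in> Ys"
  proof -
    have "real g < 4^M" using G_lt2[of M] unfolding g_def
      by (metis of_nat_less_iff of_nat_numeral of_nat_power le_less_trans le_add2 mult_2 less_imp_le_nat)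
    then have a: "y 0 < 1" unfolding y0 p2 by (simp add: field_simps)
    have o: "(1::real) \<le> 4^M" by simp
    have "(4::real)^M * 1 \<le> 4^M * 4^M" by (rule mult_left_mono[OF o]) simp
    then have "real g < 2^m" using \<open>real g < 4^M\<close> unfolding p2 by linarith
    then have b: "y 1 < 1" unfolding y1 by simp
    show ?thesis unfolding Ys_def using a b y0 y1 by (auto simp: less_2_cases_iff)
  qed
  have bdd: "bdd_above ((\<lambda>z. \<bar>discrepancy_fun 2 (2^m) x z / real (2^m)\<bar>) ` Ys)"
  proof (rule bdd_aboveI2)
    fix z assume z: "z \<in> Ys"
    have pz: "(\<Prod>i<2. z i) = z 0 * z 1" by (simp add: numeral_2_eq_2)
    have z01: "0 \<le> z 0" "z 0 < 1" "0 \<le> z 1" "z 1 < 1" using z unfolding Ys_def by auto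
    then have zz: "0 \<le> z 0 * z 1" "z 0 * z 1 \<le> 1" by (auto intro: mult_le_one)
    have "\<bar>discrepancy_fun 2 (2^m) x z\<bar> \<le> (\<Sum>n<(2::nat)^m. 1)"
      unfolding discrepancy_fun_def pz
      by (rule order_trans[OF sum_abs sum_mono]) (use zz in auto)
    then have "\<bar>discrepancy_fun 2 (2^m) x z\<bar> \<le> 2^m" by simp
    moreover have "\<bar>discrepancy_fun 2 (2^m) x z / real (2^m)\<bar> = \<bar>discrepancy_fun 2 (2^m) x z\<bar> / 2^m"
      by (simp add: abs_divide)
    ultimately show "\<bar>discrepancy_fun 2 (2^m) x z / real (2^m)\<bar> \<le> 1" by (simp add: pos_divide_le_eq)
  qed
  have st: "star_discrepancy 2 (2^m) x \<ge> \<bar>discrepancy_fun 2 (2^m) x y / real (2^m)\<bar>"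
    unfolding star_discrepancy_def Ys_def[symmetric] by (rule cSUP_upper[OF yin bdd])
  have ab: "\<bar>discrepancy_fun 2 (2^m) x y / real (2^m)\<bar> \<ge> (1 / 4) * (1 / 2 ^ (m + 2)) * real m"
    using part1 abs_ge_minus_self[of "discrepancy_fun 2 (2^m) x y / real (2^m)"] by simp
  have l: "ln ((2::real)^m) = real m * ln 2" by (simp add: ln_realpow)
  have "1 / (16 * ln 2) * (ln (2 ^ m) / 2 ^ m) = (1 / 4) * (1 / 2 ^ (m + 2)) * (real m :: real)"
    unfolding l by (simp add: field_simps)
  then have fin: "discrepancy_fun 2 (2 ^ m) x y / 2 ^ m \<le> - (1 / 4) * (1 / 2 ^ (m + 2)) * real m \<and>
         star_discrepancy 2 (2 ^ m) x \<ge> 1 / (16 * ln 2) * (ln (2 ^ m) / 2 ^ m)"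
    using part1 st ab by simp
  then show ?thesis unfolding y_def .
qed
end
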